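(* Let $k\geq 2$ be an integer and $G$ a graph. Suppose $f=u_1\dots u_{k-1}$ is a copy of $K_{k-1}$ in $G$ which is a copy of $K_{k-1}$ of two distinct $K_{k+1}$-components $C_1$ and $C_2$ of $G$. Let $uv$ and $wu_k$ be edges of $G$ such that the $k$-cliques $fu$ and $fv$ belong to $C_1$ and the $k$-cliques $fw$ and $fu_k$ belong to $C_2$. Then for each $i\in[k-1]$, the common neighbourhood $\Gamma(u_1,\dots,u_{i-1},u_{i+1},\dots,u_k,w,u,v)$ is an independent set.
   Context: A $K_{k+1}$-walk in $G$ is a sequence of copies of $K_k$ in which consecutive copies lie in a common copy of $K_{k+1}$; the endpoints are then $K_{k+1}$-connected, and the equivalence classes of copies of $K_k$ are the $K_{k+1}$-components. A copy of $K_{k-1}$ is a copy of $K_{k-1}$ of a component $C$ if it extends to a copy of $K_k$ in $C$. For a clique $f$ and vertex $x$ adjacent to all of $f$, $fx$ denotes the clique $f\cup\{x\}$. $\Gamma(x_1,\dots,x_s)$ denotes the set of common neighbours of $x_1,\dots,x_s$ in $G$. *)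

theory Defs
  imports Main
begin

definition graph :: "'a set \<Rightarrow> ('a \<Rightarrow> 'a \<Rightarrow> bool) \<Rightarrow> bool" where
  "graph V E \<longleftrightarrow> finite V \<and> (\<forall>x y. E x y \<longrightarrow> x \<in> V \<and> y \<in> V \<and> x \<noteq> y \<and> E y x)"

definition kclique :: "'a set \<Rightarrow> ('a \<Rightarrow> 'a \<Rightarrow> bool) \<Rightarrow> nat \<Rightarrow> 'a set \<Rightarrow> bool" where
  "kclique V E k S \<longleftrightarrow> S \<subseteq> V \<and> finite S \<and> card S = k \<and>
     (\<forall>x\<in>S. \<forall>y\<in>S. x \<noteq> y \<longrightarrow> E x y)"

definition walk_step :: "'a set \<Rightarrow> ('a \<Rightarrow> 'a \<Rightarrow> bool) \<Rightarrow> nat \<Rightarrow> 'a set \<Rightarrow> 'a set \<Rightarrow> bool" where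
  "walk_step V E k A B \<longleftrightarrow> kclique V E k A \<and> kclique V E k B \<and>
     (\<exists>Q. kclique V E (k + 1) Q \<and> A \<subseteq> Q \<and> B \<subseteq> Q)"

definition kconnected :: "'a set \<Rightarrow> ('a \<Rightarrow> 'a \<Rightarrow> bool) \<Rightarrow> nat \<Rightarrow> 'a set \<Rightarrow> 'a set \<Rightarrow> bool" where
  "kconnected V E k A B \<longleftrightarrow> kclique V E k A \<and> kclique V E k B \<and>
     (walk_step V E k)\<^sup>*\<^sup>* A B"

definition kcomponent :: "'a set \<Rightarrow> ('a \<Rightarrow> 'a \<Rightarrow> bool) \<Rightarrow> nat \<Rightarrow> 'a set set \<Rightarrow> bool" where
  "kcomponent V E k C \<longleftrightarrow> (\<exists>A. kclique V E k A \<and> C = {B. kconnected V E k A B})"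

text \<open>f is a copy of K_{k-1} of component C (C a K_{k+1}-component consisting of copies of K_k).\<close>
definition clique_of_component ::
  "'a set \<Rightarrow> ('a \<Rightarrow> 'a \<Rightarrow> bool) \<Rightarrow> nat \<Rightarrow> 'a set set \<Rightarrow> 'a set \<Rightarrow> bool" where
  "clique_of_component V E k C f \<longleftrightarrow> kclique V E (k - 1) f \<and> (\<exists>S\<in>C. f \<subseteq> S)"

definition common_nbhd :: "'a set \<Rightarrow> ('a \<Rightarrow> 'a \<Rightarrow> bool) \<Rightarrow> 'a set \<Rightarrow> 'a set" where
  "common_nbhd V E S = {x\<in>V. \<forall>y\<in>S. E x y}"

definition independent :: "('a \<Rightarrow> 'a \<Rightarrow> bool) \<Rightarrow> 'a set \<Rightarrow> bool" where
  "independent E T \<longleftrightarrow> (\<forall>x\<in>T. \<forall>y\<in>T. \<not> E x y)"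

end

theory Submission
  imports Defs
begin

lemma ins_facts:
  assumes "kclique V E k (insert u F)" "kclique V E (k - 1) F" "k \<ge> 2"
  shows "u \<notin> F \<and> u \<in> V \<and> (\<forall>y\<in>F. E u y)"
proof -
  have "u \<notin> F"
  proof
    assume "u \<in> F"
    then have "insert u F = F" by (rule insert_absorb)
    then have "card F = k" "card F = k - 1" using assms(1,2) unfolding kclique_def by auto
    then show False using assms(3) by simp
  qed
  then show ?thesis using assms unfolding kclique_def by auto
qed

lemma sym_ws: "symp (walk_step V E k)"
  unfolding symp_def walk_step_def by blast

lemma comp_eq:
  assumes "kcomponent V E k C1" "kcomponent V E k C2" "A \<in> C1" "B \<in> C2"
    "(walk_step V E k)\<^sup>*\<^sup>* A B"
  shows "C1 = C2"
proof -
  let ?R = "(walk_step V E k)\<^sup>*\<^sup>*"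
  have s: "?R a b \<Longrightarrow> ?R b a" for a b using sympD[OF symp_rtranclp[OF sym_ws]] by blast
  obtain A0 where A0: "kclique V E k A0" "C1 = {B. kconnected V E k A0 B}" using assms(1) kcomponent_def by blast
  obtain B0 where B0: "kclique V E k B0" "C2 = {B. kconnected V E k B0 B}" using assms(2) kcomponent_def by blast
  have "?R A0 A" "?R B0 B" using assms(3,4) A0(2) B0(2) unfolding kconnected_def by auto
  then have ab: "?R A0 B0" using rtranclp_trans[OF rtranclp_trans[OF _ assms(5)] s] by blast
  have iff: "?R A0 X \<longleftrightarrow> ?R B0 X" for X
    using rtranclp_trans[OF s[OF ab], of X] rtranclp_trans[OF ab, of X] by blast
  show ?thesis unfolding A0(2) B0(2) kconnected_def iff using A0(1) B0(1) by blast
qed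

lemma kconn_in: "kconnected V E k A B \<Longrightarrow> kclique V E k B"
  unfolding kconnected_def by simp

lemma comp_clique: "kcomponent V E k C \<Longrightarrow> B \<in> C \<Longrightarrow> kclique V E k B"
  unfolding kcomponent_def kconnected_def by auto

lemma ins:
  assumes "graph V E" "kclique V E n T" "a \<in> V" "\<forall>y\<in>T. E a y"
  shows "kclique V E (Suc n) (insert a T)"
proof -
  have irr: "\<And>x. \<not> E x x" and sy: "\<And>x y. E x y \<Longrightarrow> E y x" using assms(1) unfolding graph_def by metis+
  have "a \<notin> T" using assms(4) irr by blast
  moreover have "\<forall>x\<in>insert a T. \<forall>y\<in>insert a T. x \<noteq> y \<longrightarrow> E x y"
    using assms(2,4) sy unfolding kclique_def by (metis insert_iff)
  ultimately show ?thesis using assms(2,3) unfolding kclique_def by simp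
qed

lemma step3:
  assumes g: "graph V E" and T: "kclique V E n T" and V: "p \<in> V" "q \<in> V" "r \<in> V"
    and e: "E p q" "E p r" "E q r" and a: "\<forall>t\<in>T. E p t \<and> E q t \<and> E r t" and k: "k = n + 2"
  shows "walk_step V E k (insert p (insert r T)) (insert q (insert r T))"
proof -
  have irr: "\<And>x. \<not> E x x" and sy: "\<And>x y. E x y \<Longrightarrow> E y x" using g unfolding graph_def by metis+
  have c1: "kclique V E (Suc n) (insert r T)" using ins[OF g T] V a by blast
  have c2: "kclique V E (Suc (Suc n)) (insert p (insert r T))" using ins[OF g c1] V a e by blast
  have c3: "kclique V E (Suc (Suc n)) (insert q (insert r T))" using ins[OF g c1] V a e by blast
  have c4: "kclique V E (Suc (Suc (Suc n))) (insert p (insert q (insert r T)))"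
    using ins[OF g ins[OF g c1]] V a e sy by auto
  show ?thesis unfolding walk_step_def using c2 c3 c4 k by auto
qed

theorem lemma5p2:
  fixes V :: "'a set" and E :: "'a \<Rightarrow> 'a \<Rightarrow> bool" and k :: nat
    and us :: "nat \<Rightarrow> 'a" and u v w :: 'a and C1 C2 :: "'a set set"
  assumes "graph V E"
    and "k \<ge> 2"
    and "kclique V E (k - 1) (us ` {1..k-1})"
    and "inj_on us {1..k-1}"
    and "kcomponent V E k C1" and "kcomponent V E k C2" and "C1 \<noteq> C2"
    and "clique_of_component V E k C1 (us ` {1..k-1})"
    and "clique_of_component V E k C2 (us ` {1..k-1})"
    and "E u v" and "E w (us k)"
    and "insert u (us ` {1..k-1}) \<in> C1" and "insert v (us ` {1..k-1}) \<in> C1"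
    and "insert w (us ` {1..k-1}) \<in> C2" and "insert (us k) (us ` {1..k-1}) \<in> C2"
  shows "\<forall>i\<in>{1..k-1}.
           independent E (common_nbhd V E (us ` ({1..k} - {i}) \<union> {w, u, v}))"
proof (intro ballI)
  fix i assume i: "i \<in> {1..k-1}"
  define F where "F = us ` {1..k-1}"
  define Fi where "Fi = us ` ({1..k-1} - {i})"
  define a where "a = us i"
  define uk where "uk = us k"
  have G: "\<And>p q. E p q \<Longrightarrow> E q p \<and> p \<noteq> q \<and> p \<in> V \<and> q \<in> V" using assms(1) graph_def by metis
  have FaFi: "F = insert a Fi" using i unfolding F_def Fi_def a_def by auto
  have aFi: "a \<notin> Fi" using i assms(4) unfolding Fi_def a_def inj_on_def by auto
  have Fc: "kclique V E (k - 1) F" using assms(3) F_def by simp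
  have finFi: "finite Fi" using Fc FaFi unfolding kclique_def by auto
  have cFi: "card Fi + 2 = k" using Fc FaFi aFi finFi assms(2) unfolding kclique_def by auto
  have FiC: "kclique V E (k - 2) Fi" using Fc FaFi cFi unfolding kclique_def by auto
  have FiV: "Fi \<subseteq> V" "a \<in> V" using Fc FaFi unfolding kclique_def by auto
  have Fipw: "\<forall>p\<in>Fi. \<forall>q\<in>Fi. p \<noteq> q \<longrightarrow> E p q" "\<forall>p\<in>Fi. E a p"
    using Fc FaFi aFi unfolding kclique_def by auto
  have fu: "u \<notin> F \<and> u \<in> V \<and> (\<forall>y\<in>F. E u y)"
    by (rule ins_facts[OF comp_clique[OF assms(5) assms(12)[folded F_def]] Fc assms(2)])
  have fv: "v \<notin> F \<and> v \<in> V \<and> (\<forall>y\<in>F. E v y)"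
    by (rule ins_facts[OF comp_clique[OF assms(5) assms(13)[folded F_def]] Fc assms(2)])
  have fw: "w \<notin> F \<and> w \<in> V \<and> (\<forall>y\<in>F. E w y)"
    by (rule ins_facts[OF comp_clique[OF assms(6) assms(14)[folded F_def]] Fc assms(2)])
  have fk: "uk \<notin> F \<and> uk \<in> V \<and> (\<forall>y\<in>F. E uk y)"
    by (rule ins_facts[OF comp_clique[OF assms(6) assms(15)[folded F_def uk_def]] Fc assms(2)])
  have "{1..k} - {i} = insert k ({1..k-1} - {i})" using i assms(2) by auto
  then have eq: "us ` ({1..k} - {i}) = insert uk Fi" unfolding uk_def Fi_def by simp
  show "independent E (common_nbhd V E (us ` ({1..k} - {i}) \<union> {w, u, v}))"
    unfolding independent_def
  proof (intro ballI notI)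
    fix x y assume x: "x \<in> common_nbhd V E (us ` ({1..k} - {i}) \<union> {w, u, v})"
      and y: "y \<in> common_nbhd V E (us ` ({1..k} - {i}) \<union> {w, u, v})" and xy: "E x y"
    have xs: "x \<in> V" "\<forall>p\<in>Fi. E x p" "E x uk" "E x w" "E x u" "E x v"
      using x unfolding eq unfolding common_nbhd_def by auto
    have ys: "y \<in> V" "\<forall>p\<in>Fi. E y p" "E y uk" "E y w" "E y u" "E y v"
      using y unfolding eq unfolding common_nbhd_def by auto
    have xFi: "x \<notin> Fi" "y \<notin> Fi" using xs ys G by blast+
    have uvw: "u \<notin> Fi" "v \<notin> Fi" "w \<notin> Fi" "uk \<notin> Fi" "\<forall>p\<in>Fi. E u p \<and> E v p \<and> E w p \<and> E uk p"
      "E u a" "E v a" "E w a" "E uk a"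
      using fu fv fw fk FaFi by auto
    note facts = xs ys xFi uvw FiV Fipw finFi cFi aFi assms(10) assms(11)[folded uk_def] xy
    let ?R = "walk_step V E k"
    have k: "k = (k - 2) + 2" using assms(2) by simp
    have pw: "\<And>p q. E p q \<Longrightarrow> E q p" using G by blast
    have sy: "E a u" "E a v" "E a w" "E a uk" "E v u" "E uk w" "E y x" "E uk x" "E w x" "E u x" "E v x"
      "E uk y" "E w y" "E u y" "E v y" using facts by (blast intro: pw)+
    have vV: "u \<in> V" "v \<in> V" "w \<in> V" "uk \<in> V" using fu fv fw fk by auto
    note st = step3[OF assms(1) FiC _ _ _ _ _ _ _ k]
    have s1: "?R (insert a (insert u Fi)) (insert v (insert u Fi))"
      by (rule st) (use xs ys uvw sy vV FiV Fipw assms(10) assms(11)[folded uk_def] xy in blast)+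
    have s2: "?R (insert v (insert u Fi)) (insert x (insert u Fi))"
      by (rule st) (use xs ys uvw sy vV FiV Fipw assms(10) assms(11)[folded uk_def] xy in blast)+
    have s3: "?R (insert u (insert x Fi)) (insert y (insert x Fi))"
      by (rule st) (use xs ys uvw sy vV FiV Fipw assms(10) assms(11)[folded uk_def] xy in blast)+
    have s4: "?R (insert y (insert x Fi)) (insert uk (insert x Fi))"
      by (rule st) (use xs ys uvw sy vV FiV Fipw assms(10) assms(11)[folded uk_def] xy in blast)+
    have s5: "?R (insert x (insert uk Fi)) (insert w (insert uk Fi))"
      by (rule st) (use xs ys uvw sy vV FiV Fipw assms(10) assms(11)[folded uk_def] xy in blast)+
    have s6: "?R (insert uk (insert w Fi)) (insert a (insert w Fi))"
      by (rule st) (use xs ys uvw sy vV FiV Fipw assms(10) assms(11)[folded uk_def] xy in blast)+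
    have e1: "insert x (insert u Fi) = insert u (insert x Fi)"
      "insert uk (insert x Fi) = insert x (insert uk Fi)"
      "insert w (insert uk Fi) = insert uk (insert w Fi)" by auto
    have "?R\<^sup>*\<^sup>* (insert a (insert u Fi)) (insert a (insert w Fi))"
      using s1 s2 s3 s4 s5 s6 unfolding e1 by (meson converse_rtranclp_into_rtranclp rtranclp.rtrancl_refl)
    moreover have "insert a (insert u Fi) = insert u F" "insert a (insert w Fi) = insert w F"
      using FaFi by auto
    ultimately have "C1 = C2" using comp_eq[OF assms(5,6) assms(12)[folded F_def] assms(14)[folded F_def]] by simp
    then show False using assms(7) by simp
  qed
qed

end
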